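(* For every $i\ge2$, the Mycielski graph $G_i$ does not occur as an induced subgraph of the enhanced conflict graph of any traffic pattern in a multicast switch.
   Context: Mycielski graphs: $G_0=K_2$ and $G_{i+1}$ is the Mycielskian of $G_i$ (for a graph $H$ on $v_1,\dots,v_n$, add vertices $w_1,\dots,w_n,z$, join $w_j$ to every neighbor of $v_j$, and join $z$ to all $w_j$). Thus $G_1=C_5$, $G_2$ is the Grötzsch graph, $\omega(G_i)=2$, $\chi(G_i)=i+2$. A flow is $(i,J)$ with input $i$ and nonempty fanout $J$ of outputs; subflows are $(i,J,j)$ with $j\in J$. Enhanced conflict graph: one vertex per subflow; distinct subflows $(i,J,j),(i',J',j')$ adjacent iff $j=j'$, or $i=i'$ and $J\ne J'$. *)

theory Defs
  imports Main
begin

text \<open>A finite simple graph is represented as a pair (n, E): vertex set {0..<n}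
  and a symmetric irreflexive adjacency relation E on it.\<close>

type_synonym sgraph = "nat \<times> (nat \<Rightarrow> nat \<Rightarrow> bool)"

text \<open>Mycielskian of a graph on v_0..v_(n-1): v_j = j, w_j = n + j, z = 2n.\<close>
definition mycielskian :: "sgraph \<Rightarrow> sgraph" where
  "mycielskian G = (let n = fst G; E = snd G in
     (2 * n + 1, \<lambda>u v.
        (u < n \<and> v < n \<and> E u v)
      \<or> (u < n \<and> n \<le> v \<and> v < 2 * n \<and> E u (v - n))
      \<or> (v < n \<and> n \<le> u \<and> u < 2 * n \<and> E (u - n) v)
      \<or> (u = 2 * n \<and> n \<le> v \<and> v < 2 * n)
      \<or> (v = 2 * n \<and> n \<le> u \<and> u < 2 * n)))"

fun mycielski :: "nat \<Rightarrow> sgraph" where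
  "mycielski 0 = (2, \<lambda>u v. (u = 0 \<and> v = 1) \<or> (u = 1 \<and> v = 0))"
| "mycielski (Suc i) = mycielskian (mycielski i)"

text \<open>Flows (i, J): input i, fanout J (nonempty set of outputs).
  A traffic pattern is a finite set of flows.\<close>
type_synonym flow = "nat \<times> nat set"
type_synonym subflow = "nat \<times> nat set \<times> nat"

definition traffic_pattern :: "flow set \<Rightarrow> bool" where
  "traffic_pattern T \<longleftrightarrow> finite T \<and> (\<forall>(i, J) \<in> T. J \<noteq> {} \<and> finite J)"

definition subflows :: "flow set \<Rightarrow> subflow set" where
  "subflows T = {(i, J, j). (i, J) \<in> T \<and> j \<in> J}"

definition ecg_adj :: "subflow \<Rightarrow> subflow \<Rightarrow> bool" where
  "ecg_adj s s' \<longleftrightarrow> s \<noteq> s' \<and>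
     (snd (snd s) = snd (snd s') \<or> (fst s = fst s' \<and> fst (snd s) \<noteq> fst (snd s')))"

definition occurs_induced :: "sgraph \<Rightarrow> 'v set \<Rightarrow> ('v \<Rightarrow> 'v \<Rightarrow> bool) \<Rightarrow> bool" where
  "occurs_induced G V A \<longleftrightarrow> (\<exists>f. inj_on f {..<fst G} \<and> f ` {..<fst G} \<subseteq> V \<and>
     (\<forall>u < fst G. \<forall>v < fst G. snd G u v \<longleftrightarrow> A (f u) (f v)))"

end

theory Submission
  imports Defs
begin

lemma grotzsch_core0:
  fixes out inp :: "nat \<Rightarrow> 'a" and grp :: "nat \<Rightarrow> 'b"
  assumes "True"
  and "(out 0 = out 1 \<or> (inp 0 = inp 1 \<and> grp 0 \<noteq> grp 1))"
  and "\<not> (out 0 = out 1 \<and> inp 0 = inp 1 \<and> grp 0 = grp 1)"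
  and "\<not> (out 0 = out 2 \<or> (inp 0 = inp 2 \<and> grp 0 \<noteq> grp 2))"
  and "\<not> (out 0 = out 2 \<and> inp 0 = inp 2 \<and> grp 0 = grp 2)"
  and "(out 0 = out 3 \<or> (inp 0 = inp 3 \<and> grp 0 \<noteq> grp 3))"
  and "\<not> (out 0 = out 3 \<and> inp 0 = inp 3 \<and> grp 0 = grp 3)"
  and "\<not> (out 0 = out 4 \<or> (inp 0 = inp 4 \<and> grp 0 \<noteq> grp 4))"
  and "\<not> (out 0 = out 4 \<and> inp 0 = inp 4 \<and> grp 0 = grp 4)"
  and "\<not> (out 0 = out 5 \<or> (inp 0 = inp 5 \<and> grp 0 \<noteq> grp 5))"
  and "\<not> (out 0 = out 5 \<and> inp 0 = inp 5 \<and> grp 0 = grp 5)"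
  and "(out 0 = out 6 \<or> (inp 0 = inp 6 \<and> grp 0 \<noteq> grp 6))"
  and "\<not> (out 0 = out 6 \<and> inp 0 = inp 6 \<and> grp 0 = grp 6)"
  and "\<not> (out 0 = out 7 \<or> (inp 0 = inp 7 \<and> grp 0 \<noteq> grp 7))"
  and "\<not> (out 0 = out 7 \<and> inp 0 = inp 7 \<and> grp 0 = grp 7)"
  and "(out 0 = out 8 \<or> (inp 0 = inp 8 \<and> grp 0 \<noteq> grp 8))"
  and "\<not> (out 0 = out 8 \<and> inp 0 = inp 8 \<and> grp 0 = grp 8)"
  and "\<not> (out 0 = out 9 \<or> (inp 0 = inp 9 \<and> grp 0 \<noteq> grp 9))"
  and "\<not> (out 0 = out 9 \<and> inp 0 = inp 9 \<and> grp 0 = grp 9)"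
  and "\<not> (out 0 = out 10 \<or> (inp 0 = inp 10 \<and> grp 0 \<noteq> grp 10))"
  and "\<not> (out 0 = out 10 \<and> inp 0 = inp 10 \<and> grp 0 = grp 10)"
  and "(out 1 = out 2 \<or> (inp 1 = inp 2 \<and> grp 1 \<noteq> grp 2))"
  and "\<not> (out 1 = out 2 \<and> inp 1 = inp 2 \<and> grp 1 = grp 2)"
  and "\<not> (out 1 = out 3 \<or> (inp 1 = inp 3 \<and> grp 1 \<noteq> grp 3))"
  and "\<not> (out 1 = out 3 \<and> inp 1 = inp 3 \<and> grp 1 = grp 3)"
  and "\<not> (out 1 = out 4 \<or> (inp 1 = inp 4 \<and> grp 1 \<noteq> grp 4))"
  and "\<not> (out 1 = out 4 \<and> inp 1 = inp 4 \<and> grp 1 = grp 4)"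
  and "(out 1 = out 5 \<or> (inp 1 = inp 5 \<and> grp 1 \<noteq> grp 5))"
  and "\<not> (out 1 = out 5 \<and> inp 1 = inp 5 \<and> grp 1 = grp 5)"
  and "\<not> (out 1 = out 6 \<or> (inp 1 = inp 6 \<and> grp 1 \<noteq> grp 6))"
  and "\<not> (out 1 = out 6 \<and> inp 1 = inp 6 \<and> grp 1 = grp 6)"
  and "(out 1 = out 7 \<or> (inp 1 = inp 7 \<and> grp 1 \<noteq> grp 7))"
  and "\<not> (out 1 = out 7 \<and> inp 1 = inp 7 \<and> grp 1 = grp 7)"
  and "\<not> (out 1 = out 8 \<or> (inp 1 = inp 8 \<and> grp 1 \<noteq> grp 8))"
  and "\<not> (out 1 = out 8 \<and> inp 1 = inp 8 \<and> grp 1 = grp 8)"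
  and "\<not> (out 1 = out 9 \<or> (inp 1 = inp 9 \<and> grp 1 \<noteq> grp 9))"
  and "\<not> (out 1 = out 9 \<and> inp 1 = inp 9 \<and> grp 1 = grp 9)"
  and "\<not> (out 1 = out 10 \<or> (inp 1 = inp 10 \<and> grp 1 \<noteq> grp 10))"
  and "\<not> (out 1 = out 10 \<and> inp 1 = inp 10 \<and> grp 1 = grp 10)"
  and "\<not> (out 2 = out 3 \<or> (inp 2 = inp 3 \<and> grp 2 \<noteq> grp 3))"
  and "\<not> (out 2 = out 3 \<and> inp 2 = inp 3 \<and> grp 2 = grp 3)"
  and "(out 2 = out 4 \<or> (inp 2 = inp 4 \<and> grp 2 \<noteq> grp 4))"
  and "\<not> (out 2 = out 4 \<and> inp 2 = inp 4 \<and> grp 2 = grp 4)"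
  and "\<not> (out 2 = out 5 \<or> (inp 2 = inp 5 \<and> grp 2 \<noteq> grp 5))"
  and "\<not> (out 2 = out 5 \<and> inp 2 = inp 5 \<and> grp 2 = grp 5)"
  and "(out 2 = out 6 \<or> (inp 2 = inp 6 \<and> grp 2 \<noteq> grp 6))"
  and "\<not> (out 2 = out 6 \<and> inp 2 = inp 6 \<and> grp 2 = grp 6)"
  and "\<not> (out 2 = out 7 \<or> (inp 2 = inp 7 \<and> grp 2 \<noteq> grp 7))"
  and "\<not> (out 2 = out 7 \<and> inp 2 = inp 7 \<and> grp 2 = grp 7)"
  and "\<not> (out 2 = out 8 \<or> (inp 2 = inp 8 \<and> grp 2 \<noteq> grp 8))"
  and "\<not> (out 2 = out 8 \<and> inp 2 = inp 8 \<and> grp 2 = grp 8)"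
  and "(out 2 = out 9 \<or> (inp 2 = inp 9 \<and> grp 2 \<noteq> grp 9))"
  and "\<not> (out 2 = out 9 \<and> inp 2 = inp 9 \<and> grp 2 = grp 9)"
  and "\<not> (out 2 = out 10 \<or> (inp 2 = inp 10 \<and> grp 2 \<noteq> grp 10))"
  and "\<not> (out 2 = out 10 \<and> inp 2 = inp 10 \<and> grp 2 = grp 10)"
  and "(out 3 = out 4 \<or> (inp 3 = inp 4 \<and> grp 3 \<noteq> grp 4))"
  and "\<not> (out 3 = out 4 \<and> inp 3 = inp 4 \<and> grp 3 = grp 4)"
  and "(out 3 = out 5 \<or> (inp 3 = inp 5 \<and> grp 3 \<noteq> grp 5))"
  and "\<not> (out 3 = out 5 \<and> inp 3 = inp 5 \<and> grp 3 = grp 5)"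
  and "\<not> (out 3 = out 6 \<or> (inp 3 = inp 6 \<and> grp 3 \<noteq> grp 6))"
  and "\<not> (out 3 = out 6 \<and> inp 3 = inp 6 \<and> grp 3 = grp 6)"
  and "\<not> (out 3 = out 7 \<or> (inp 3 = inp 7 \<and> grp 3 \<noteq> grp 7))"
  and "\<not> (out 3 = out 7 \<and> inp 3 = inp 7 \<and> grp 3 = grp 7)"
  and "\<not> (out 3 = out 8 \<or> (inp 3 = inp 8 \<and> grp 3 \<noteq> grp 8))"
  and "\<not> (out 3 = out 8 \<and> inp 3 = inp 8 \<and> grp 3 = grp 8)"
  and "(out 3 = out 9 \<or> (inp 3 = inp 9 \<and> grp 3 \<noteq> grp 9))"
  and "\<not> (out 3 = out 9 \<and> inp 3 = inp 9 \<and> grp 3 = grp 9)"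
  and "\<not> (out 3 = out 10 \<or> (inp 3 = inp 10 \<and> grp 3 \<noteq> grp 10))"
  and "\<not> (out 3 = out 10 \<and> inp 3 = inp 10 \<and> grp 3 = grp 10)"
  and "\<not> (out 4 = out 5 \<or> (inp 4 = inp 5 \<and> grp 4 \<noteq> grp 5))"
  and "\<not> (out 4 = out 5 \<and> inp 4 = inp 5 \<and> grp 4 = grp 5)"
  and "\<not> (out 4 = out 6 \<or> (inp 4 = inp 6 \<and> grp 4 \<noteq> grp 6))"
  and "\<not> (out 4 = out 6 \<and> inp 4 = inp 6 \<and> grp 4 = grp 6)"
  and "(out 4 = out 7 \<or> (inp 4 = inp 7 \<and> grp 4 \<noteq> grp 7))"
  and "\<not> (out 4 = out 7 \<and> inp 4 = inp 7 \<and> grp 4 = grp 7)"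
  and "(out 4 = out 8 \<or> (inp 4 = inp 8 \<and> grp 4 \<noteq> grp 8))"
  and "\<not> (out 4 = out 8 \<and> inp 4 = inp 8 \<and> grp 4 = grp 8)"
  and "\<not> (out 4 = out 9 \<or> (inp 4 = inp 9 \<and> grp 4 \<noteq> grp 9))"
  and "\<not> (out 4 = out 9 \<and> inp 4 = inp 9 \<and> grp 4 = grp 9)"
  and "\<not> (out 4 = out 10 \<or> (inp 4 = inp 10 \<and> grp 4 \<noteq> grp 10))"
  and "\<not> (out 4 = out 10 \<and> inp 4 = inp 10 \<and> grp 4 = grp 10)"
  and "\<not> (out 5 = out 6 \<or> (inp 5 = inp 6 \<and> grp 5 \<noteq> grp 6))"
  and "\<not> (out 5 = out 6 \<and> inp 5 = inp 6 \<and> grp 5 = grp 6)"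
  and "\<not> (out 5 = out 7 \<or> (inp 5 = inp 7 \<and> grp 5 \<noteq> grp 7))"
  and "\<not> (out 5 = out 7 \<and> inp 5 = inp 7 \<and> grp 5 = grp 7)"
  and "\<not> (out 5 = out 8 \<or> (inp 5 = inp 8 \<and> grp 5 \<noteq> grp 8))"
  and "\<not> (out 5 = out 8 \<and> inp 5 = inp 8 \<and> grp 5 = grp 8)"
  and "\<not> (out 5 = out 9 \<or> (inp 5 = inp 9 \<and> grp 5 \<noteq> grp 9))"
  and "\<not> (out 5 = out 9 \<and> inp 5 = inp 9 \<and> grp 5 = grp 9)"
  and "(out 5 = out 10 \<or> (inp 5 = inp 10 \<and> grp 5 \<noteq> grp 10))"
  and "\<not> (out 5 = out 10 \<and> inp 5 = inp 10 \<and> grp 5 = grp 10)"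
  and "\<not> (out 6 = out 7 \<or> (inp 6 = inp 7 \<and> grp 6 \<noteq> grp 7))"
  and "\<not> (out 6 = out 7 \<and> inp 6 = inp 7 \<and> grp 6 = grp 7)"
  and "\<not> (out 6 = out 8 \<or> (inp 6 = inp 8 \<and> grp 6 \<noteq> grp 8))"
  and "\<not> (out 6 = out 8 \<and> inp 6 = inp 8 \<and> grp 6 = grp 8)"
  and "\<not> (out 6 = out 9 \<or> (inp 6 = inp 9 \<and> grp 6 \<noteq> grp 9))"
  and "\<not> (out 6 = out 9 \<and> inp 6 = inp 9 \<and> grp 6 = grp 9)"
  and "(out 6 = out 10 \<or> (inp 6 = inp 10 \<and> grp 6 \<noteq> grp 10))"
  and "\<not> (out 6 = out 10 \<and> inp 6 = inp 10 \<and> grp 6 = grp 10)"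
  and "\<not> (out 7 = out 8 \<or> (inp 7 = inp 8 \<and> grp 7 \<noteq> grp 8))"
  and "\<not> (out 7 = out 8 \<and> inp 7 = inp 8 \<and> grp 7 = grp 8)"
  and "\<not> (out 7 = out 9 \<or> (inp 7 = inp 9 \<and> grp 7 \<noteq> grp 9))"
  and "\<not> (out 7 = out 9 \<and> inp 7 = inp 9 \<and> grp 7 = grp 9)"
  and "(out 7 = out 10 \<or> (inp 7 = inp 10 \<and> grp 7 \<noteq> grp 10))"
  and "\<not> (out 7 = out 10 \<and> inp 7 = inp 10 \<and> grp 7 = grp 10)"
  and "\<not> (out 8 = out 9 \<or> (inp 8 = inp 9 \<and> grp 8 \<noteq> grp 9))"
  and "\<not> (out 8 = out 9 \<and> inp 8 = inp 9 \<and> grp 8 = grp 9)"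
  and "(out 8 = out 10 \<or> (inp 8 = inp 10 \<and> grp 8 \<noteq> grp 10))"
  and "\<not> (out 8 = out 10 \<and> inp 8 = inp 10 \<and> grp 8 = grp 10)"
  and "(out 9 = out 10 \<or> (inp 9 = inp 10 \<and> grp 9 \<noteq> grp 10))"
  and "\<not> (out 9 = out 10 \<and> inp 9 = inp 10 \<and> grp 9 = grp 10)"
  shows False
  using assms by (smt (z3))

lemma grotzsch_core:
  fixes out inp :: "nat \<Rightarrow> 'a" and grp :: "nat \<Rightarrow> 'b"
  assumes A: "\<And>u v. u < 11 \<Longrightarrow> v < 11 \<Longrightarrow> u \<noteq> v \<Longrightarrow> snd (mycielski 2) u v = (out u = out v \<or> (inp u = inp v \<and> grp u \<noteq> grp v))"
  and B: "\<And>u v. u < 11 \<Longrightarrow> v < 11 \<Longrightarrow> u \<noteq> v \<Longrightarrow> \<not> (out u = out v \<and> inp u = inp v \<and> grp u = grp v)"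
  shows False
proof -
  have h0: "(out 0 = out 1 \<or> (inp 0 = inp 1 \<and> grp 0 \<noteq> grp 1))" using A[of 0 1] by (simp add: mycielskian_def numeral_eq_Suc Let_def)
  have h1: "\<not> (out 0 = out 1 \<and> inp 0 = inp 1 \<and> grp 0 = grp 1)" using B[of 0 1] by simp
  have h2: "\<not> (out 0 = out 2 \<or> (inp 0 = inp 2 \<and> grp 0 \<noteq> grp 2))" using A[of 0 2] by (simp add: mycielskian_def numeral_eq_Suc Let_def)
  have h3: "\<not> (out 0 = out 2 \<and> inp 0 = inp 2 \<and> grp 0 = grp 2)" using B[of 0 2] by simp
  have h4: "(out 0 = out 3 \<or> (inp 0 = inp 3 \<and> grp 0 \<noteq> grp 3))" using A[of 0 3] by (simp add: mycielskian_def numeral_eq_Suc Let_def)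
  have h5: "\<not> (out 0 = out 3 \<and> inp 0 = inp 3 \<and> grp 0 = grp 3)" using B[of 0 3] by simp
  have h6: "\<not> (out 0 = out 4 \<or> (inp 0 = inp 4 \<and> grp 0 \<noteq> grp 4))" using A[of 0 4] by (simp add: mycielskian_def numeral_eq_Suc Let_def)
  have h7: "\<not> (out 0 = out 4 \<and> inp 0 = inp 4 \<and> grp 0 = grp 4)" using B[of 0 4] by simp
  have h8: "\<not> (out 0 = out 5 \<or> (inp 0 = inp 5 \<and> grp 0 \<noteq> grp 5))" using A[of 0 5] by (simp add: mycielskian_def numeral_eq_Suc Let_def)
  have h9: "\<not> (out 0 = out 5 \<and> inp 0 = inp 5 \<and> grp 0 = grp 5)" using B[of 0 5] by simp
  have h10: "(out 0 = out 6 \<or> (inp 0 = inp 6 \<and> grp 0 \<noteq> grp 6))" using A[of 0 6] by (simp add: mycielskian_def numeral_eq_Suc Let_def)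
  have h11: "\<not> (out 0 = out 6 \<and> inp 0 = inp 6 \<and> grp 0 = grp 6)" using B[of 0 6] by simp
  have h12: "\<not> (out 0 = out 7 \<or> (inp 0 = inp 7 \<and> grp 0 \<noteq> grp 7))" using A[of 0 7] by (simp add: mycielskian_def numeral_eq_Suc Let_def)
  have h13: "\<not> (out 0 = out 7 \<and> inp 0 = inp 7 \<and> grp 0 = grp 7)" using B[of 0 7] by simp
  have h14: "(out 0 = out 8 \<or> (inp 0 = inp 8 \<and> grp 0 \<noteq> grp 8))" using A[of 0 8] by (simp add: mycielskian_def numeral_eq_Suc Let_def)
  have h15: "\<not> (out 0 = out 8 \<and> inp 0 = inp 8 \<and> grp 0 = grp 8)" using B[of 0 8] by simp
  have h16: "\<not> (out 0 = out 9 \<or> (inp 0 = inp 9 \<and> grp 0 \<noteq> grp 9))" using A[of 0 9] by (simp add: mycielskian_def numeral_eq_Suc Let_def)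
  have h17: "\<not> (out 0 = out 9 \<and> inp 0 = inp 9 \<and> grp 0 = grp 9)" using B[of 0 9] by simp
  have h18: "\<not> (out 0 = out 10 \<or> (inp 0 = inp 10 \<and> grp 0 \<noteq> grp 10))" using A[of 0 10] by (simp add: mycielskian_def numeral_eq_Suc Let_def)
  have h19: "\<not> (out 0 = out 10 \<and> inp 0 = inp 10 \<and> grp 0 = grp 10)" using B[of 0 10] by simp
  have h20: "(out 1 = out 2 \<or> (inp 1 = inp 2 \<and> grp 1 \<noteq> grp 2))" using A[of 1 2] by (simp add: mycielskian_def numeral_eq_Suc Let_def)
  have h21: "\<not> (out 1 = out 2 \<and> inp 1 = inp 2 \<and> grp 1 = grp 2)" using B[of 1 2] by simp
  have h22: "\<not> (out 1 = out 3 \<or> (inp 1 = inp 3 \<and> grp 1 \<noteq> grp 3))" using A[of 1 3] by (simp add: mycielskian_def numeral_eq_Suc Let_def)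
  have h23: "\<not> (out 1 = out 3 \<and> inp 1 = inp 3 \<and> grp 1 = grp 3)" using B[of 1 3] by simp
  have h24: "\<not> (out 1 = out 4 \<or> (inp 1 = inp 4 \<and> grp 1 \<noteq> grp 4))" using A[of 1 4] by (simp add: mycielskian_def numeral_eq_Suc Let_def)
  have h25: "\<not> (out 1 = out 4 \<and> inp 1 = inp 4 \<and> grp 1 = grp 4)" using B[of 1 4] by simp
  have h26: "(out 1 = out 5 \<or> (inp 1 = inp 5 \<and> grp 1 \<noteq> grp 5))" using A[of 1 5] by (simp add: mycielskian_def numeral_eq_Suc Let_def)
  have h27: "\<not> (out 1 = out 5 \<and> inp 1 = inp 5 \<and> grp 1 = grp 5)" using B[of 1 5] by simp
  have h28: "\<not> (out 1 = out 6 \<or> (inp 1 = inp 6 \<and> grp 1 \<noteq> grp 6))" using A[of 1 6] by (simp add: mycielskian_def numeral_eq_Suc Let_def)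
  have h29: "\<not> (out 1 = out 6 \<and> inp 1 = inp 6 \<and> grp 1 = grp 6)" using B[of 1 6] by simp
  have h30: "(out 1 = out 7 \<or> (inp 1 = inp 7 \<and> grp 1 \<noteq> grp 7))" using A[of 1 7] by (simp add: mycielskian_def numeral_eq_Suc Let_def)
  have h31: "\<not> (out 1 = out 7 \<and> inp 1 = inp 7 \<and> grp 1 = grp 7)" using B[of 1 7] by simp
  have h32: "\<not> (out 1 = out 8 \<or> (inp 1 = inp 8 \<and> grp 1 \<noteq> grp 8))" using A[of 1 8] by (simp add: mycielskian_def numeral_eq_Suc Let_def)
  have h33: "\<not> (out 1 = out 8 \<and> inp 1 = inp 8 \<and> grp 1 = grp 8)" using B[of 1 8] by simp
  have h34: "\<not> (out 1 = out 9 \<or> (inp 1 = inp 9 \<and> grp 1 \<noteq> grp 9))" using A[of 1 9] by (simp add: mycielskian_def numeral_eq_Suc Let_def)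
  have h35: "\<not> (out 1 = out 9 \<and> inp 1 = inp 9 \<and> grp 1 = grp 9)" using B[of 1 9] by simp
  have h36: "\<not> (out 1 = out 10 \<or> (inp 1 = inp 10 \<and> grp 1 \<noteq> grp 10))" using A[of 1 10] by (simp add: mycielskian_def numeral_eq_Suc Let_def)
  have h37: "\<not> (out 1 = out 10 \<and> inp 1 = inp 10 \<and> grp 1 = grp 10)" using B[of 1 10] by simp
  have h38: "\<not> (out 2 = out 3 \<or> (inp 2 = inp 3 \<and> grp 2 \<noteq> grp 3))" using A[of 2 3] by (simp add: mycielskian_def numeral_eq_Suc Let_def)
  have h39: "\<not> (out 2 = out 3 \<and> inp 2 = inp 3 \<and> grp 2 = grp 3)" using B[of 2 3] by simp
  have h40: "(out 2 = out 4 \<or> (inp 2 = inp 4 \<and> grp 2 \<noteq> grp 4))" using A[of 2 4] by (simp add: mycielskian_def numeral_eq_Suc Let_def)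
  have h41: "\<not> (out 2 = out 4 \<and> inp 2 = inp 4 \<and> grp 2 = grp 4)" using B[of 2 4] by simp
  have h42: "\<not> (out 2 = out 5 \<or> (inp 2 = inp 5 \<and> grp 2 \<noteq> grp 5))" using A[of 2 5] by (simp add: mycielskian_def numeral_eq_Suc Let_def)
  have h43: "\<not> (out 2 = out 5 \<and> inp 2 = inp 5 \<and> grp 2 = grp 5)" using B[of 2 5] by simp
  have h44: "(out 2 = out 6 \<or> (inp 2 = inp 6 \<and> grp 2 \<noteq> grp 6))" using A[of 2 6] by (simp add: mycielskian_def numeral_eq_Suc Let_def)
  have h45: "\<not> (out 2 = out 6 \<and> inp 2 = inp 6 \<and> grp 2 = grp 6)" using B[of 2 6] by simp
  have h46: "\<not> (out 2 = out 7 \<or> (inp 2 = inp 7 \<and> grp 2 \<noteq> grp 7))" using A[of 2 7] by (simp add: mycielskian_def numeral_eq_Suc Let_def)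
  have h47: "\<not> (out 2 = out 7 \<and> inp 2 = inp 7 \<and> grp 2 = grp 7)" using B[of 2 7] by simp
  have h48: "\<not> (out 2 = out 8 \<or> (inp 2 = inp 8 \<and> grp 2 \<noteq> grp 8))" using A[of 2 8] by (simp add: mycielskian_def numeral_eq_Suc Let_def)
  have h49: "\<not> (out 2 = out 8 \<and> inp 2 = inp 8 \<and> grp 2 = grp 8)" using B[of 2 8] by simp
  have h50: "(out 2 = out 9 \<or> (inp 2 = inp 9 \<and> grp 2 \<noteq> grp 9))" using A[of 2 9] by (simp add: mycielskian_def numeral_eq_Suc Let_def)
  have h51: "\<not> (out 2 = out 9 \<and> inp 2 = inp 9 \<and> grp 2 = grp 9)" using B[of 2 9] by simp
  have h52: "\<not> (out 2 = out 10 \<or> (inp 2 = inp 10 \<and> grp 2 \<noteq> grp 10))" using A[of 2 10] by (simp add: mycielskian_def numeral_eq_Suc Let_def)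
  have h53: "\<not> (out 2 = out 10 \<and> inp 2 = inp 10 \<and> grp 2 = grp 10)" using B[of 2 10] by simp
  have h54: "(out 3 = out 4 \<or> (inp 3 = inp 4 \<and> grp 3 \<noteq> grp 4))" using A[of 3 4] by (simp add: mycielskian_def numeral_eq_Suc Let_def)
  have h55: "\<not> (out 3 = out 4 \<and> inp 3 = inp 4 \<and> grp 3 = grp 4)" using B[of 3 4] by simp
  have h56: "(out 3 = out 5 \<or> (inp 3 = inp 5 \<and> grp 3 \<noteq> grp 5))" using A[of 3 5] by (simp add: mycielskian_def numeral_eq_Suc Let_def)
  have h57: "\<not> (out 3 = out 5 \<and> inp 3 = inp 5 \<and> grp 3 = grp 5)" using B[of 3 5] by simp
  have h58: "\<not> (out 3 = out 6 \<or> (inp 3 = inp 6 \<and> grp 3 \<noteq> grp 6))" using A[of 3 6] by (simp add: mycielskian_def numeral_eq_Suc Let_def)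
  have h59: "\<not> (out 3 = out 6 \<and> inp 3 = inp 6 \<and> grp 3 = grp 6)" using B[of 3 6] by simp
  have h60: "\<not> (out 3 = out 7 \<or> (inp 3 = inp 7 \<and> grp 3 \<noteq> grp 7))" using A[of 3 7] by (simp add: mycielskian_def numeral_eq_Suc Let_def)
  have h61: "\<not> (out 3 = out 7 \<and> inp 3 = inp 7 \<and> grp 3 = grp 7)" using B[of 3 7] by simp
  have h62: "\<not> (out 3 = out 8 \<or> (inp 3 = inp 8 \<and> grp 3 \<noteq> grp 8))" using A[of 3 8] by (simp add: mycielskian_def numeral_eq_Suc Let_def)
  have h63: "\<not> (out 3 = out 8 \<and> inp 3 = inp 8 \<and> grp 3 = grp 8)" using B[of 3 8] by simp
  have h64: "(out 3 = out 9 \<or> (inp 3 = inp 9 \<and> grp 3 \<noteq> grp 9))" using A[of 3 9] by (simp add: mycielskian_def numeral_eq_Suc Let_def)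
  have h65: "\<not> (out 3 = out 9 \<and> inp 3 = inp 9 \<and> grp 3 = grp 9)" using B[of 3 9] by simp
  have h66: "\<not> (out 3 = out 10 \<or> (inp 3 = inp 10 \<and> grp 3 \<noteq> grp 10))" using A[of 3 10] by (simp add: mycielskian_def numeral_eq_Suc Let_def)
  have h67: "\<not> (out 3 = out 10 \<and> inp 3 = inp 10 \<and> grp 3 = grp 10)" using B[of 3 10] by simp
  have h68: "\<not> (out 4 = out 5 \<or> (inp 4 = inp 5 \<and> grp 4 \<noteq> grp 5))" using A[of 4 5] by (simp add: mycielskian_def numeral_eq_Suc Let_def)
  have h69: "\<not> (out 4 = out 5 \<and> inp 4 = inp 5 \<and> grp 4 = grp 5)" using B[of 4 5] by simp
  have h70: "\<not> (out 4 = out 6 \<or> (inp 4 = inp 6 \<and> grp 4 \<noteq> grp 6))" using A[of 4 6] by (simp add: mycielskian_def numeral_eq_Suc Let_def)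
  have h71: "\<not> (out 4 = out 6 \<and> inp 4 = inp 6 \<and> grp 4 = grp 6)" using B[of 4 6] by simp
  have h72: "(out 4 = out 7 \<or> (inp 4 = inp 7 \<and> grp 4 \<noteq> grp 7))" using A[of 4 7] by (simp add: mycielskian_def numeral_eq_Suc Let_def)
  have h73: "\<not> (out 4 = out 7 \<and> inp 4 = inp 7 \<and> grp 4 = grp 7)" using B[of 4 7] by simp
  have h74: "(out 4 = out 8 \<or> (inp 4 = inp 8 \<and> grp 4 \<noteq> grp 8))" using A[of 4 8] by (simp add: mycielskian_def numeral_eq_Suc Let_def)
  have h75: "\<not> (out 4 = out 8 \<and> inp 4 = inp 8 \<and> grp 4 = grp 8)" using B[of 4 8] by simp
  have h76: "\<not> (out 4 = out 9 \<or> (inp 4 = inp 9 \<and> grp 4 \<noteq> grp 9))" using A[of 4 9] by (simp add: mycielskian_def numeral_eq_Suc Let_def)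
  have h77: "\<not> (out 4 = out 9 \<and> inp 4 = inp 9 \<and> grp 4 = grp 9)" using B[of 4 9] by simp
  have h78: "\<not> (out 4 = out 10 \<or> (inp 4 = inp 10 \<and> grp 4 \<noteq> grp 10))" using A[of 4 10] by (simp add: mycielskian_def numeral_eq_Suc Let_def)
  have h79: "\<not> (out 4 = out 10 \<and> inp 4 = inp 10 \<and> grp 4 = grp 10)" using B[of 4 10] by simp
  have h80: "\<not> (out 5 = out 6 \<or> (inp 5 = inp 6 \<and> grp 5 \<noteq> grp 6))" using A[of 5 6] by (simp add: mycielskian_def numeral_eq_Suc Let_def)
  have h81: "\<not> (out 5 = out 6 \<and> inp 5 = inp 6 \<and> grp 5 = grp 6)" using B[of 5 6] by simp
  have h82: "\<not> (out 5 = out 7 \<or> (inp 5 = inp 7 \<and> grp 5 \<noteq> grp 7))" using A[of 5 7] by (simp add: mycielskian_def numeral_eq_Suc Let_def)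
  have h83: "\<not> (out 5 = out 7 \<and> inp 5 = inp 7 \<and> grp 5 = grp 7)" using B[of 5 7] by simp
  have h84: "\<not> (out 5 = out 8 \<or> (inp 5 = inp 8 \<and> grp 5 \<noteq> grp 8))" using A[of 5 8] by (simp add: mycielskian_def numeral_eq_Suc Let_def)
  have h85: "\<not> (out 5 = out 8 \<and> inp 5 = inp 8 \<and> grp 5 = grp 8)" using B[of 5 8] by simp
  have h86: "\<not> (out 5 = out 9 \<or> (inp 5 = inp 9 \<and> grp 5 \<noteq> grp 9))" using A[of 5 9] by (simp add: mycielskian_def numeral_eq_Suc Let_def)
  have h87: "\<not> (out 5 = out 9 \<and> inp 5 = inp 9 \<and> grp 5 = grp 9)" using B[of 5 9] by simp
  have h88: "(out 5 = out 10 \<or> (inp 5 = inp 10 \<and> grp 5 \<noteq> grp 10))" using A[of 5 10] by (simp add: mycielskian_def numeral_eq_Suc Let_def)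
  have h89: "\<not> (out 5 = out 10 \<and> inp 5 = inp 10 \<and> grp 5 = grp 10)" using B[of 5 10] by simp
  have h90: "\<not> (out 6 = out 7 \<or> (inp 6 = inp 7 \<and> grp 6 \<noteq> grp 7))" using A[of 6 7] by (simp add: mycielskian_def numeral_eq_Suc Let_def)
  have h91: "\<not> (out 6 = out 7 \<and> inp 6 = inp 7 \<and> grp 6 = grp 7)" using B[of 6 7] by simp
  have h92: "\<not> (out 6 = out 8 \<or> (inp 6 = inp 8 \<and> grp 6 \<noteq> grp 8))" using A[of 6 8] by (simp add: mycielskian_def numeral_eq_Suc Let_def)
  have h93: "\<not> (out 6 = out 8 \<and> inp 6 = inp 8 \<and> grp 6 = grp 8)" using B[of 6 8] by simp
  have h94: "\<not> (out 6 = out 9 \<or> (inp 6 = inp 9 \<and> grp 6 \<noteq> grp 9))" using A[of 6 9] by (simp add: mycielskian_def numeral_eq_Suc Let_def)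
  have h95: "\<not> (out 6 = out 9 \<and> inp 6 = inp 9 \<and> grp 6 = grp 9)" using B[of 6 9] by simp
  have h96: "(out 6 = out 10 \<or> (inp 6 = inp 10 \<and> grp 6 \<noteq> grp 10))" using A[of 6 10] by (simp add: mycielskian_def numeral_eq_Suc Let_def)
  have h97: "\<not> (out 6 = out 10 \<and> inp 6 = inp 10 \<and> grp 6 = grp 10)" using B[of 6 10] by simp
  have h98: "\<not> (out 7 = out 8 \<or> (inp 7 = inp 8 \<and> grp 7 \<noteq> grp 8))" using A[of 7 8] by (simp add: mycielskian_def numeral_eq_Suc Let_def)
  have h99: "\<not> (out 7 = out 8 \<and> inp 7 = inp 8 \<and> grp 7 = grp 8)" using B[of 7 8] by simp
  have h100: "\<not> (out 7 = out 9 \<or> (inp 7 = inp 9 \<and> grp 7 \<noteq> grp 9))" using A[of 7 9] by (simp add: mycielskian_def numeral_eq_Suc Let_def)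
  have h101: "\<not> (out 7 = out 9 \<and> inp 7 = inp 9 \<and> grp 7 = grp 9)" using B[of 7 9] by simp
  have h102: "(out 7 = out 10 \<or> (inp 7 = inp 10 \<and> grp 7 \<noteq> grp 10))" using A[of 7 10] by (simp add: mycielskian_def numeral_eq_Suc Let_def)
  have h103: "\<not> (out 7 = out 10 \<and> inp 7 = inp 10 \<and> grp 7 = grp 10)" using B[of 7 10] by simp
  have h104: "\<not> (out 8 = out 9 \<or> (inp 8 = inp 9 \<and> grp 8 \<noteq> grp 9))" using A[of 8 9] by (simp add: mycielskian_def numeral_eq_Suc Let_def)
  have h105: "\<not> (out 8 = out 9 \<and> inp 8 = inp 9 \<and> grp 8 = grp 9)" using B[of 8 9] by simp
  have h106: "(out 8 = out 10 \<or> (inp 8 = inp 10 \<and> grp 8 \<noteq> grp 10))" using A[of 8 10] by (simp add: mycielskian_def numeral_eq_Suc Let_def)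
  have h107: "\<not> (out 8 = out 10 \<and> inp 8 = inp 10 \<and> grp 8 = grp 10)" using B[of 8 10] by simp
  have h108: "(out 9 = out 10 \<or> (inp 9 = inp 10 \<and> grp 9 \<noteq> grp 10))" using A[of 9 10] by (simp add: mycielskian_def numeral_eq_Suc Let_def)
  have h109: "\<not> (out 9 = out 10 \<and> inp 9 = inp 10 \<and> grp 9 = grp 10)" using B[of 9 10] by simp
  show False by (rule grotzsch_core0[of out inp grp]) (simp_all only: h0 h1 h2 h3 h4 h5 h6 h7 h8 h9 h10 h11 h12 h13 h14 h15 h16 h17 h18 h19 h20 h21 h22 h23 h24 h25 h26 h27 h28 h29 h30 h31 h32 h33 h34 h35 h36 h37 h38 h39 h40 h41 h42 h43 h44 h45 h46 h47 h48 h49 h50 h51 h52 h53 h54 h55 h56 h57 h58 h59 h60 h61 h62 h63 h64 h65 h66 h67 h68 h69 h70 h71 h72 h73 h74 h75 h76 h77 h78 h79 h80 h81 h82 h83 h84 h85 h86 h87 h88 h89 h90 h91 h92 h93 h94 h95 h96 h97 h98 h99 h100 h101 h102 h103 h104 h105 h106 h107 h108 h109 TrueI not_False_eq_True)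
qed

lemma myc_fst: "fst (mycielskian G) = 2 * fst G + 1"
  by (simp add: mycielskian_def Let_def)

lemma myc_snd: "u < fst G \<Longrightarrow> v < fst G \<Longrightarrow> snd (mycielskian G) u v = snd G u v"
  by (auto simp add: mycielskian_def Let_def)

lemma myc_mono: "2 \<le> i \<Longrightarrow> fst (mycielski 2) \<le> fst (mycielski i) \<and>
   (\<forall>u<fst (mycielski 2). \<forall>v<fst (mycielski 2). snd (mycielski i) u v = snd (mycielski 2) u v)"
proof (induction i rule: dec_induct)
  case base
  then show ?case by simp
next
  case (step n)
  then show ?case using myc_fst[of "mycielski n"] myc_snd[of _ "mycielski n"]
    by (auto simp del: mycielski.simps(1))
qed

lemma fst_myc2: "fst (mycielski 2) = 11"
  by (simp add: mycielskian_def numeral_eq_Suc Let_def)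

theorem corollary2:
  fixes i :: nat and T :: "flow set"
  assumes "2 \<le> i" and "traffic_pattern T"
  shows "\<not> occurs_induced (mycielski i) (subflows T) ecg_adj"
proof
  assume "occurs_induced (mycielski i) (subflows T) ecg_adj"
  then obtain f where inj: "inj_on f {..<fst (mycielski i)}"
    and ad: "\<forall>u < fst (mycielski i). \<forall>v < fst (mycielski i). snd (mycielski i) u v \<longleftrightarrow> ecg_adj (f u) (f v)"
    unfolding occurs_induced_def by blast
  have mm: "11 \<le> fst (mycielski i)"
    "\<forall>u<11. \<forall>v<11. snd (mycielski i) u v = snd (mycielski 2) u v"
    using myc_mono[OF assms(1)] fst_myc2 by auto
  define out where "out u = snd (snd (f u))" for u
  define inp where "inp u = fst (f u)" for u
  define grp where "grp u = fst (snd (f u))" for u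
  have neq: "f u \<noteq> f v" if "u < 11" "v < 11" "u \<noteq> v" for u v
    using inj that mm(1) by (meson inj_onD lessThan_iff order_less_le_trans)
  show False
  proof (rule grotzsch_core[of out inp grp])
    fix u v :: nat assume uv: "u < 11" "v < 11" "u \<noteq> v"
    have "snd (mycielski 2) u v = ecg_adj (f u) (f v)"
      using mm ad uv by (metis order_less_le_trans)
    then show "snd (mycielski 2) u v = (out u = out v \<or> (inp u = inp v \<and> grp u \<noteq> grp v))"
      using neq[OF uv] by (simp add: ecg_adj_def out_def inp_def grp_def)
    show "\<not> (out u = out v \<and> inp u = inp v \<and> grp u = grp v)"
      using neq[OF uv] by (auto simp add: out_def inp_def grp_def prod_eq_iff)
  qed
qed

end
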